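(* Let $\mathcal{B}$ be a prime Banach algebra over $\mathbb{R}$ or $\mathbb{C}$, and let $\mathcal{H}_1,\mathcal{H}_2$ be non-empty open subsets of $\mathcal{B}$. Suppose $\mathcal{B}$ admits a continuous automorphism $f$ such that for every $(x,y)\in\mathcal{H}_1\times\mathcal{H}_2$ there exist positive integers $p=p(x,y)$, $q=q(x,y)$ with $$f(x^{p}\circ y^{q})+[x^{p},y^{q}]\in Z(\mathcal{B}).$$ Then $\mathcal{B}$ is commutative.
   Context: $Z(\mathcal{B})$ denotes the center of $\mathcal{B}$. For $x,y\in\mathcal{B}$, $x\circ y=xy+yx$ and $[x,y]=xy-yx$. $\mathcal{B}$ is prime if $x\mathcal{B}y=\{0\}$ implies $x=0$ or $y=0$. An automorphism of $\mathcal{B}$ is a bijective map $f:\mathcal{B}\to\mathcal{B}$ with $f(x+y)=f(x)+f(y)$ and $f(xy)=f(x)f(y)$ for all $x,y$. *)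

theory Defs
  imports "HOL-Analysis.Analysis"
begin

text \<open>Positive powers in a possibly non-unital algebra: ppow x n = x^n for n \<ge> 1
  (the value at n = 0 is a junk value and is never used).\<close>
fun ppow :: "'a::times \<Rightarrow> nat \<Rightarrow> 'a" where
  "ppow x 0 = x"
| "ppow x (Suc 0) = x"
| "ppow x (Suc (Suc n)) = x * ppow x (Suc n)"

definition center :: "'a::times set" where
  "center = {z. \<forall>x. z * x = x * z}"

definition jordan_prod :: "'a::{times,plus} \<Rightarrow> 'a \<Rightarrow> 'a" where
  "jordan_prod x y = x * y + y * x"

definition commutator :: "'a::{times,minus} \<Rightarrow> 'a \<Rightarrow> 'a" where
  "commutator x y = x * y - y * x"

definition prime_ring :: "'a::{times,zero} itself \<Rightarrow> bool" where
  "prime_ring _ \<longleftrightarrow> (\<forall>x y::'a. (\<forall>b. x * b * y = 0) \<longrightarrow> x = 0 \<or> y = 0)"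

definition is_automorphism :: "('a::{times,plus} \<Rightarrow> 'a) \<Rightarrow> bool" where
  "is_automorphism f \<longleftrightarrow> bij f \<and> (\<forall>x y. f (x + y) = f x + f y) \<and> (\<forall>x y. f (x * y) = f x * f y)"

end

theory Submission
  imports Defs
begin

lemma ppow_Suc: "n > 0 \<Longrightarrow> ppow x (Suc n) = x * ppow x n"
  by (cases n) auto

lemma ppow_Suc_right: "n > 0 \<Longrightarrow> ppow (x::'a::semigroup_mult) (Suc n) = ppow x n * x"
proof (induction n rule: nat_less_induct)
  case (1 n)
  show ?case
  proof (cases n)
    case 0 then show ?thesis using 1 by simp
  next
    case (Suc m)
    show ?thesis
    proof (cases m)
      case 0 then show ?thesis using Suc by simp
    next
      case (Suc k)
      have "ppow x (Suc n) = x * ppow x n" using ppow_Suc 1 by blast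
      also have "ppow x n = ppow x m * x" using 1 \<open>n = Suc m\<close> Suc by auto
      also have "x * (ppow x m * x) = (x * ppow x m) * x" by (simp add: mult.assoc)
      also have "x * ppow x m = ppow x n" using ppow_Suc[of m x] Suc \<open>n = Suc m\<close> by simp
      finally show ?thesis .
    qed
  qed
qed

lemma ppow_add: "m > 0 \<Longrightarrow> n > 0 \<Longrightarrow> ppow (x::'a::semigroup_mult) m * ppow x n = ppow x (m + n)"
proof (induction m rule: nat_less_induct)
  case (1 m)
  show ?case
  proof (cases m)
    case 0 then show ?thesis using 1 by simp
  next
    case (Suc k)
    show ?thesis
    proof (cases k)
      case 0 then show ?thesis using Suc 1 by (simp add: ppow_Suc)
    next
      case (Suc j)
      have "ppow x m * ppow x n = x * (ppow x k * ppow x n)"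
        using ppow_Suc[of k x] \<open>m = Suc k\<close> Suc by (simp add: mult.assoc)
      also have "ppow x k * ppow x n = ppow x (k + n)" using 1 \<open>m = Suc k\<close> Suc by auto
      also have "x * ppow x (k + n) = ppow x (m + n)" using ppow_Suc[of "k+n" x] \<open>m = Suc k\<close> Suc by simp
      finally show ?thesis .
    qed
  qed
qed

lemma ppow_comm: "m > 0 \<Longrightarrow> n > 0 \<Longrightarrow> ppow (x::'a::semigroup_mult) m * ppow x n = ppow x n * ppow x m"
  by (simp add: ppow_add add.commute)

lemma ppow_scaleR: "n > 0 \<Longrightarrow> ppow (r *\<^sub>R (x::'a::real_algebra)) n = (r ^ n) *\<^sub>R ppow x n"
proof (induction n rule: nat_less_induct)
  case (1 n)
  show ?case
  proof (cases n)
    case 0 then show ?thesis using 1 by simp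
  next
    case (Suc k)
    show ?thesis
    proof (cases k)
      case 0 then show ?thesis using Suc by simp
    next
      case (Suc j)
      have "ppow (r *\<^sub>R x) n = (r *\<^sub>R x) * ppow (r *\<^sub>R x) k" using ppow_Suc[of k] \<open>n = Suc k\<close> Suc by simp
      also have "\<dots> = (r *\<^sub>R x) * ((r ^ k) *\<^sub>R ppow x k)" using 1 \<open>n = Suc k\<close> Suc by auto
      also have "\<dots> = (r ^ n) *\<^sub>R (x * ppow x k)" using \<open>n = Suc k\<close> by (simp add: mult.commute)
      also have "x * ppow x k = ppow x n" using ppow_Suc[of k x] \<open>n = Suc k\<close> Suc by simp
      finally show ?thesis .
    qed
  qed
qed

lemma ppow_zero_mono: "ppow (y::'a::{semigroup_mult,mult_zero}) k = 0 \<Longrightarrow> k > 0 \<Longrightarrow> k \<le> m \<Longrightarrow> ppow y m = 0"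
proof (induction m)
  case 0 then show ?case by simp
next
  case (Suc m)
  show ?case
  proof (cases "k = Suc m")
    case True then show ?thesis using Suc by simp
  next
    case False
    then have "ppow y m = 0" "m > 0" using Suc by auto
    then show ?thesis by (simp add: ppow_Suc)
  qed
qed

lemma continuous_on_ppow:
  fixes g :: "'b::topological_space \<Rightarrow> 'a::real_normed_algebra"
  assumes "continuous_on S g"
  shows "continuous_on S (\<lambda>z. ppow (g z) n)"
proof (induction n rule: nat_less_induct)
  case (1 n)
  show ?case
  proof (cases n)
    case 0 then show ?thesis using assms by simp
  next
    case (Suc k)
    show ?thesis
    proof (cases k)
      case 0 then show ?thesis using Suc assms by simp
    next
      case (Suc j)
      then show ?thesis using 1 \<open>n = Suc k\<close> assms by (auto intro!: continuous_on_mult)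
    qed
  qed
qed

lemma closed_center: "closed (center :: 'a::real_normed_algebra set)"
proof -
  have e: "center = (\<Inter>w. {z::'a. z * w = w * z})" unfolding center_def by blast
  have c: "closed {z::'a. z * w = w * z}" for w
    by (rule closed_Collect_eq, rule continuous_on_mult_right, rule continuous_on_id,
        rule continuous_on_mult_left, rule continuous_on_id)
  show ?thesis unfolding e by (rule closed_INT) (simp add: c)
qed

lemma center_scaleR: "z \<in> center \<Longrightarrow> (r *\<^sub>R (z::'a::real_algebra)) \<in> center"
  by (auto simp: center_def)

lemma center_add: "z \<in> center \<Longrightarrow> w \<in> center \<Longrightarrow> (z + (w::'a::ring)) \<in> center"
  by (auto simp: center_def algebra_simps)

lemma additive_cont_homog:
  fixes g :: "'a::real_normed_vector \<Rightarrow> 'b::real_normed_vector"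
  assumes add: "\<And>x y. g (x + y) = g x + g y" and cont: "continuous_on UNIV g"
  shows "g (r *\<^sub>R x) = r *\<^sub>R g x"
proof -
  have g0: "g 0 = 0" using add[of 0 0] by simp
  have gneg: "g (- y) = - g y" for y using add[of y "-y"] g0 by (metis add.commute eq_neg_iff_add_eq_0)
  have gnat: "g (of_nat n *\<^sub>R y) = of_nat n *\<^sub>R g y" for n y
    by (induction n) (auto simp: g0 add scaleR_add_left)
  have gint: "g (of_int i *\<^sub>R y) = of_int i *\<^sub>R g y" for i y
  proof (cases "i \<ge> 0")
    case True then obtain n where "i = int n" by (metis nonneg_int_cases)
    then show ?thesis using gnat by simp
  next
    case False
    define n where "n = nat (- i)"
    have "i = - int n" using False by (simp add: n_def)
    then show ?thesis using gnat gneg by simp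
  qed
  have grat: "g (q *\<^sub>R x) = q *\<^sub>R g x" if "q \<in> \<rat>" for q
  proof -
    obtain a b where ab: "q = of_int a / of_int b" "b > 0" using \<open>q \<in> \<rat>\<close> by (auto elim: Rats_cases')
    have "of_int b *\<^sub>R g (q *\<^sub>R x) = g (of_int b *\<^sub>R (q *\<^sub>R x))" using gint[of b "q *\<^sub>R x"] by simp
    also have "of_int b *\<^sub>R (q *\<^sub>R x) = of_int a *\<^sub>R x" using ab by simp
    also have "g \<dots> = of_int a *\<^sub>R g x" using gint by simp
    finally have "of_int b *\<^sub>R g (q *\<^sub>R x) = of_int a *\<^sub>R g x" .
    then have "(1 / of_int b) *\<^sub>R (of_int b *\<^sub>R g (q *\<^sub>R x)) = (1 / of_int b) *\<^sub>R (of_int a *\<^sub>R g x)" by simp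
    then show ?thesis using ab by (simp add: divide_inverse)
  qed
  have cl: "closed {r. g (r *\<^sub>R x) - r *\<^sub>R g x = 0}"
    by (intro closed_Collect_eq continuous_intros continuous_on_compose2[OF cont]) auto
  have "\<rat> \<subseteq> {r. g (r *\<^sub>R x) - r *\<^sub>R g x = 0}" using grat by auto
  then have "closure \<rat> \<subseteq> {r. g (r *\<^sub>R x) - r *\<^sub>R g x = 0}" using cl closure_minimal by blast
  then show ?thesis by (auto simp: Rats_closure_real)
qed

definition polyfun :: "(real \<Rightarrow> 'a::real_normed_vector) \<Rightarrow> bool" where
  "polyfun h \<longleftrightarrow> (\<exists>N c. \<forall>t. h t = (\<Sum>k<N. t ^ k *\<^sub>R c k))"

lemma sum_pad:
  fixes g :: "nat \<Rightarrow> 'b::comm_monoid_add"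
  assumes "N \<le> M" shows "(\<Sum>k<N. g k) = (\<Sum>k<M. if k < N then g k else 0)"
proof -
  have "(\<Sum>k<M. if k < N then g k else 0) = (\<Sum>k\<in>{..<M} \<inter> {..<N}. g k)"
    by (simp add: sum.inter_restrict)
  also have "{..<M} \<inter> {..<N} = {..<N}" using assms by auto
  finally show ?thesis by simp
qed

lemma polyfun_const: "polyfun (\<lambda>t. c)"
  unfolding polyfun_def by (rule exI[of _ 1], rule exI[of _ "\<lambda>k. c"]) simp

lemma polyfun_line: "polyfun (\<lambda>t. a + t *\<^sub>R b)"
  unfolding polyfun_def
  by (rule exI[of _ 2], rule exI[of _ "\<lambda>k. if k = 0 then a else b"]) (simp add: numeral_2_eq_2)

lemma polyfun_add:
  assumes "polyfun h1" "polyfun h2" shows "polyfun (\<lambda>t. h1 t + h2 t)"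
proof -
  obtain N1 c1 where 1: "\<And>t. h1 t = (\<Sum>k<N1. t ^ k *\<^sub>R c1 k)" using assms(1) unfolding polyfun_def by blast
  obtain N2 c2 where 2: "\<And>t. h2 t = (\<Sum>k<N2. t ^ k *\<^sub>R c2 k)" using assms(2) unfolding polyfun_def by blast
  define c where "c k = (if k < N1 then c1 k else 0) + (if k < N2 then c2 k else 0)" for k
  have "h1 t + h2 t = (\<Sum>k<N1+N2. t ^ k *\<^sub>R c k)" for t
  proof -
    have "h1 t = (\<Sum>k<N1+N2. if k < N1 then t ^ k *\<^sub>R c1 k else 0)" using 1 sum_pad[of N1 "N1+N2"] by simp
    moreover have "h2 t = (\<Sum>k<N1+N2. if k < N2 then t ^ k *\<^sub>R c2 k else 0)" using 2 sum_pad[of N2 "N1+N2"] by simp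
    ultimately show ?thesis
      by (simp add: sum.distrib[symmetric], intro sum.cong) (auto simp: c_def scaleR_add_right)
  qed
  then show ?thesis unfolding polyfun_def by blast
qed

lemma linear_sum_poly:
  fixes g :: "'a::real_vector \<Rightarrow> 'b::real_vector"
  assumes add: "\<And>x y. g (x + y) = g x + g y" and hom: "\<And>r x. g (r *\<^sub>R x) = r *\<^sub>R g x"
  shows "g (\<Sum>k<N. t ^ k *\<^sub>R c k) = (\<Sum>k<N. t ^ k *\<^sub>R g (c k))"
proof (induction N)
  case 0
  have "g 0 = 0" using hom[of 0 0] by (simp only: scaleR_zero_left)
  then show ?case by simp
next
  case (Suc N) then show ?case by (simp add: add hom)
qed

lemma polyfun_linear:
  fixes g :: "'a::real_normed_vector \<Rightarrow> 'b::real_normed_vector"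
  assumes add: "\<And>x y. g (x + y) = g x + g y" and hom: "\<And>r x. g (r *\<^sub>R x) = r *\<^sub>R g x"
    and "polyfun h"
  shows "polyfun (\<lambda>t. g (h t))"
proof -
  obtain N c where 1: "\<And>t. h t = (\<Sum>k<N. t ^ k *\<^sub>R c k)" using assms(3) unfolding polyfun_def by blast
  have *: "g (h t) = (\<Sum>k<N. t ^ k *\<^sub>R g (c k))" for t using 1 linear_sum_poly[OF add hom] by simp
  show ?thesis unfolding polyfun_def by (rule exI[of _ N], rule exI[of _ "\<lambda>k. g (c k)"]) (simp add: *)
qed

lemma polyfun_uminus: "polyfun h \<Longrightarrow> polyfun (\<lambda>t. - h t)"
  using polyfun_linear[of uminus h] by (simp add: scaleR_right.minus)

lemma polyfun_diff: "polyfun h1 \<Longrightarrow> polyfun h2 \<Longrightarrow> polyfun (\<lambda>t. h1 t - h2 t)"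
  using polyfun_add[of h1 "\<lambda>t. - h2 t"] polyfun_uminus[of h2] by simp

lemma inner: fixes X :: "'a::real_vector"
  assumes "i < N" "j < M"
  shows "(\<Sum>k<N+M. if i + j = k then t ^ k *\<^sub>R X else 0) = t ^ (i + j) *\<^sub>R X"
proof -
  have "i + j \<in> {..<N+M}" using assms by auto
  then show ?thesis by (simp add: sum.delta)
qed
lemma polyfun_mult:
  fixes h1 h2 :: "real \<Rightarrow> 'a::real_normed_algebra"
  assumes "polyfun h1" "polyfun h2" shows "polyfun (\<lambda>t. h1 t * h2 t)"
proof -
  obtain N c where 1: "\<And>t. h1 t = (\<Sum>k<N. t ^ k *\<^sub>R c k)" using assms(1) unfolding polyfun_def by blast
  obtain M d where 2: "\<And>t. h2 t = (\<Sum>k<M. t ^ k *\<^sub>R d k)" using assms(2) unfolding polyfun_def by blast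
  define e where "e k = (\<Sum>i<N. \<Sum>j<M. if i + j = k then c i * d j else 0)" for k
  have "h1 t * h2 t = (\<Sum>k<N+M. t ^ k *\<^sub>R e k)" for t
  proof -
    have "h1 t * h2 t = (\<Sum>i<N. \<Sum>j<M. (t ^ i *\<^sub>R c i) * (t ^ j *\<^sub>R d j))"
      unfolding 1 2 by (rule sum_product)
    also have "\<dots> = (\<Sum>i<N. \<Sum>j<M. t ^ (i + j) *\<^sub>R (c i * d j))"
      by (simp add: power_add mult.commute)
    also have "\<dots> = (\<Sum>i<N. \<Sum>j<M. \<Sum>k<N+M. if i + j = k then t ^ k *\<^sub>R (c i * d j) else 0)"
      by (intro sum.cong refl, simp add: inner)
    also have "\<dots> = (\<Sum>k<N+M. \<Sum>i<N. \<Sum>j<M. if i + j = k then t ^ k *\<^sub>R (c i * d j) else 0)"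
      by (simp only: sum.swap[where A="{..<M}" and B="{..<N+M}"] sum.swap[where A="{..<N}" and B="{..<N+M}"])
    also have "\<dots> = (\<Sum>k<N+M. t ^ k *\<^sub>R e k)"
      unfolding e_def scaleR_sum_right by (intro sum.cong refl) simp
    finally show ?thesis .
  qed
  then show ?thesis unfolding polyfun_def by blast
qed

lemma polyfun_ppow:
  fixes h :: "real \<Rightarrow> 'a::real_normed_algebra"
  assumes "polyfun h" shows "polyfun (\<lambda>t. ppow (h t) n)"
proof (induction n rule: nat_less_induct)
  case (1 n)
  show ?case
  proof (cases n)
    case 0 then show ?thesis using assms by simp
  next
    case (Suc k)
    show ?thesis
    proof (cases k)
      case 0 then show ?thesis using Suc assms by simp
    next
      case (Suc j)
      then have "polyfun (\<lambda>t. h t * ppow (h t) k)" using 1 \<open>n = Suc k\<close> assms polyfun_mult by auto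
      then show ?thesis using \<open>n = Suc k\<close> Suc by (simp add: ppow_Suc)
    qed
  qed
qed

lemma poly_coeffs_zero:
  fixes c :: "nat \<Rightarrow> 'a::real_normed_vector"
  assumes "\<epsilon> > 0" "\<forall>t. 0 < \<bar>t\<bar> \<and> \<bar>t\<bar> < \<epsilon> \<longrightarrow> (\<Sum>k<N. t ^ k *\<^sub>R c k) = 0"
  shows "\<forall>k<N. c k = 0"
  using assms(2)
proof (induction N arbitrary: c)
  case 0 then show ?case by simp
next
  case (Suc N)
  have split: "(\<Sum>k<Suc N. t ^ k *\<^sub>R c k) = c 0 + t *\<^sub>R (\<Sum>k<N. t ^ k *\<^sub>R c (Suc k))" for t
    by (simp only: sum.lessThan_Suc_shift) (simp add: scaleR_sum_right del: sum.lessThan_Suc)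
  have lim: "((\<lambda>t. c 0 + t *\<^sub>R (\<Sum>k<N. t ^ k *\<^sub>R c (Suc k))) \<longlongrightarrow> c 0 + 0 *\<^sub>R (\<Sum>k<N. 0 ^ k *\<^sub>R c (Suc k))) (at 0)"
    by (intro tendsto_intros)
  have ev: "eventually (\<lambda>t. c 0 + t *\<^sub>R (\<Sum>k<N. t ^ k *\<^sub>R c (Suc k)) = 0) (at (0::real))"
  proof -
    have "eventually (\<lambda>t. t \<noteq> 0 \<and> dist t 0 < \<epsilon>) (at (0::real))"
      using assms(1) eventually_at by blast
    then show ?thesis
      by eventually_elim (use Suc.prems split in auto)
  qed
  have lim0: "((\<lambda>t. c 0 + t *\<^sub>R (\<Sum>k<N. t ^ k *\<^sub>R c (Suc k))) \<longlongrightarrow> 0) (at (0::real))"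
    using ev by (rule tendsto_eventually)
  have c0: "c 0 = 0" using tendsto_unique[OF trivial_limit_at lim lim0] by simp
  have "\<forall>t. 0 < \<bar>t\<bar> \<and> \<bar>t\<bar> < \<epsilon> \<longrightarrow> (\<Sum>k<N. t ^ k *\<^sub>R c (Suc k)) = 0"
  proof (intro allI impI)
    fix t :: real assume h: "0 < \<bar>t\<bar> \<and> \<bar>t\<bar> < \<epsilon>"
    have "(\<Sum>k<Suc N. t ^ k *\<^sub>R c k) = 0" using Suc.prems h by blast
    then have "t *\<^sub>R (\<Sum>k<N. t ^ k *\<^sub>R c (Suc k)) = 0" unfolding split c0 by simp
    then show "(\<Sum>k<N. t ^ k *\<^sub>R c (Suc k)) = 0" using h by simp
  qed
  then have "\<forall>k<N. c (Suc k) = 0" by (rule Suc.IH)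
  then show ?case using c0 by (auto simp: less_Suc_eq_0_disj)
qed

lemma polyfun_zero:
  fixes h :: "real \<Rightarrow> 'a::real_normed_vector"
  assumes "polyfun h" "\<epsilon> > 0" "\<And>t. \<bar>t\<bar> < \<epsilon> \<Longrightarrow> h t = 0"
  shows "h t = 0"
proof -
  obtain N c where 1: "\<And>t. h t = (\<Sum>k<N. t ^ k *\<^sub>R c k)" using assms(1) unfolding polyfun_def by blast
  have "\<forall>k<N. c k = 0" using poly_coeffs_zero[OF assms(2), where N=N and c=c] 1 assms(3) by auto
  then show ?thesis using 1 by simp
qed

fun dpow :: "'a::real_normed_algebra \<Rightarrow> 'a \<Rightarrow> nat \<Rightarrow> 'a" where
  "dpow a b 0 = b"
| "dpow a b (Suc 0) = b"
| "dpow a b (Suc (Suc m)) = a * dpow a b (Suc m) + b * ppow a (Suc m)"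

lemma line_deriv: "((\<lambda>t. a + t *\<^sub>R b) has_vector_derivative b) (at x)"
  by (auto intro!: derivative_eq_intros)

lemma ppow_line_deriv:
  fixes a b :: "'a::real_normed_algebra"
  assumes "n > 0"
  shows "((\<lambda>t. ppow (a + t *\<^sub>R b) n) has_vector_derivative dpow a b n) (at 0)"
  using assms
proof (induction n rule: nat_less_induct)
  case (1 n)
  show ?case
  proof (cases n)
    case 0 then show ?thesis using 1 by simp
  next
    case (Suc k)
    show ?thesis
    proof (cases k)
      case 0 then show ?thesis using Suc line_deriv[of a b 0] by simp
    next
      case (Suc j)
      have IH: "((\<lambda>t. ppow (a + t *\<^sub>R b) k) has_vector_derivative dpow a b k) (at 0)"
        using 1 \<open>n = Suc k\<close> Suc by auto
      have "((\<lambda>t. (a + t *\<^sub>R b) * ppow (a + t *\<^sub>R b) k) has_vector_derivative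
              ((a + 0 *\<^sub>R b) * dpow a b k + b * ppow (a + 0 *\<^sub>R b) k)) (at 0)"
        by (rule has_vector_derivative_mult[OF line_deriv IH])
      then show ?thesis using \<open>n = Suc k\<close> Suc by (simp add: ppow_Suc)
    qed
  qed
qed

lemma deriv_center:
  fixes \<phi> :: "real \<Rightarrow> 'a::real_normed_algebra"
  assumes d: "(\<phi> has_vector_derivative d) (at 0)" and c: "\<And>t. \<phi> t \<in> center"
  shows "d \<in> center"
proof -
  have "d * w = w * d" for w
  proof -
    have "((\<lambda>t. \<phi> t * w - w * \<phi> t) has_vector_derivative (d * w - w * d)) (at 0)"
      by (intro has_vector_derivative_diff has_vector_derivative_mult_left has_vector_derivative_mult_right d)
    moreover have "(\<lambda>t. \<phi> t * w - w * \<phi> t) = (\<lambda>t. 0)" using c by (auto simp: center_def)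
    ultimately have "((\<lambda>t. 0) has_vector_derivative (d * w - w * d)) (at (0::real))" by simp
    moreover have "((\<lambda>t. 0::'a) has_vector_derivative 0) (at (0::real))" by (rule has_vector_derivative_const)
    ultimately have "d * w - w * d = 0" by (rule vector_derivative_unique_at)
    then show ?thesis by simp
  qed
  then show ?thesis by (auto simp: center_def)
qed

lemma deriv_zero:
  fixes \<phi> :: "real \<Rightarrow> 'a::real_normed_algebra"
  assumes d: "(\<phi> has_vector_derivative d) (at 0)" and c: "\<And>t. \<phi> t = 0"
  shows "d = 0"
proof -
  have "\<phi> = (\<lambda>t. 0)" using c by auto
  then have "((\<lambda>t. 0) has_vector_derivative d) (at (0::real))" using d by simp
  moreover have "((\<lambda>t. 0::'a) has_vector_derivative 0) (at (0::real))" by (rule has_vector_derivative_const)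
  ultimately show ?thesis by (rule vector_derivative_unique_at)
qed

lemma dpow_sq: "n > 0 \<Longrightarrow> dpow x (x * x) n = of_nat n *\<^sub>R ppow (x::'a::real_normed_algebra) (Suc n)"
proof (induction n rule: nat_less_induct)
  case (1 n)
  show ?case
  proof (cases n)
    case 0 then show ?thesis using 1 by simp
  next
    case (Suc k)
    show ?thesis
    proof (cases k)
      case 0 then show ?thesis using Suc by simp
    next
      case (Suc j)
      have IH: "dpow x (x * x) k = of_nat k *\<^sub>R ppow x (Suc k)" using 1 \<open>n = Suc k\<close> Suc by auto
      have e1: "x * ppow x (Suc k) = ppow x (Suc n)" using \<open>n = Suc k\<close> by simp
      have e2: "(x * x) * ppow x k = ppow x (Suc n)"
        using \<open>n = Suc k\<close> Suc by (simp add: mult.assoc ppow_Suc)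
      have "dpow x (x * x) n = x * dpow x (x * x) k + (x * x) * ppow x k" using \<open>n = Suc k\<close> Suc by simp
      also have "\<dots> = of_nat k *\<^sub>R ppow x (Suc n) + ppow x (Suc n)" using IH e1 e2 by simp
      also have "\<dots> = of_nat n *\<^sub>R ppow x (Suc n)" using \<open>n = Suc k\<close> by (simp add: scaleR_add_left)
      finally show ?thesis .
    qed
  qed
qed

lemma prime_zero:
  assumes "prime_ring TYPE('a::{times,zero})" "\<And>b. (x::'a) * b * x = 0"
  shows "x = 0"
  using assms unfolding prime_ring_def by blast

lemma central_or_nil:
  fixes x :: "'a::real_normed_algebra"
  assumes pr: "prime_ring TYPE('a)" and n: "n > 0" and pc: "\<And>y::'a. ppow y n \<in> center"
  shows "x \<in> center \<or> ppow x n = 0"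
proof -
  have "dpow x (x * x) n \<in> center"
    by (rule deriv_center[OF ppow_line_deriv[OF n]]) (rule pc)
  then have "of_nat n *\<^sub>R ppow x (Suc n) \<in> center" unfolding dpow_sq[OF n] .
  then have "(1 / of_nat n) *\<^sub>R (of_nat n *\<^sub>R ppow x (Suc n)) \<in> center" by (rule center_scaleR)
  then have xc: "x * ppow x n \<in> center" using n ppow_Suc[OF n, of x] by simp
  define c where "c = ppow x n"
  have cc: "c \<in> center" using pc c_def by simp
  show ?thesis
  proof (cases "c = 0")
    case True then show ?thesis using c_def by simp
  next
    case False
    have "x * r = r * x" for r
    proof -
      have "(x * r - r * x) * b * c = 0" for b
      proof -
        have "(x * r - r * x) * b * c = (x * r - r * x) * c * b"
          using cc by (simp add: center_def mult.assoc)
        also have "(x * r - r * x) * c = x * r * c - r * x * c" by (simp add: algebra_simps)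
        also have "x * r * c = (x * c) * r" using cc by (simp add: center_def mult.assoc)
        also have "\<dots> = r * (x * c)" using xc c_def by (simp add: center_def)
        finally show ?thesis by (simp add: mult.assoc)
      qed
      then have "x * r - r * x = 0 \<or> c = 0" using pr unfolding prime_ring_def by blast
      then show ?thesis using False by simp
    qed
    then show ?thesis by (simp add: center_def)
  qed
qed

lemma nil_descent:
  fixes y :: "'a::real_normed_algebra"
  assumes pr: "prime_ring TYPE('a)" and nil: "\<And>z::'a. ppow z (Suc (Suc m)) = 0"
  shows "ppow y (Suc m) = 0"
proof (rule prime_zero[OF pr])
  fix x
  have "dpow y x (Suc (Suc m)) = 0"
    by (rule deriv_zero[OF ppow_line_deriv], simp, rule nil)
  then have "ppow y (Suc m) * dpow y x (Suc (Suc m)) = 0" by simp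
  moreover have "ppow y (Suc m) * y = 0" using ppow_Suc_right[of "Suc m" y] nil by simp
  ultimately have "ppow y (Suc m) * (x * ppow y (Suc m)) = 0"
    by (simp add: distrib_left mult.assoc[symmetric])
  then show "ppow y (Suc m) * x * ppow y (Suc m) = 0" by (simp add: mult.assoc)
qed

lemma nil_zero:
  fixes y :: "'a::real_normed_algebra"
  assumes pr: "prime_ring TYPE('a)" and n: "n > 0" and nil: "\<And>z::'a. ppow z n = 0"
  shows "y = 0"
  using n nil
proof (induction n arbitrary: y)
  case 0 then show ?case by simp
next
  case (Suc k)
  show ?case
  proof (cases k)
    case 0 then show ?thesis using Suc.prems by (metis ppow.simps(2))
  next
    case (Suc j)
    have "\<And>z::'a. ppow z k = 0" using nil_descent[OF pr] Suc.prems \<open>k = Suc j\<close> by blast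
    then show ?thesis using Suc.IH \<open>k = Suc j\<close> by blast
  qed
qed

lemma comm_from_power_central:
  fixes dummy :: "'a::real_normed_algebra"
  assumes pr: "prime_ring TYPE('a)" and n: "n > 0" and pc: "\<And>y::'a. ppow y n \<in> center"
  shows "\<forall>x y::'a. x * y = y * x"
proof (rule ccontr)
  assume "\<not> ?thesis"
  then obtain x0 :: 'a where x0: "x0 \<notin> center" by (auto simp: center_def)
  have "ppow y n = 0" for y :: 'a
  proof -
    define u where "u t = y + t *\<^sub>R x0" for t :: real
    have two: "s = t" if "u s \<in> center" "u t \<in> center" for s t
    proof (rule ccontr)
      assume "s \<noteq> t"
      have "u s - u t \<in> center" using that by (auto simp: center_def algebra_simps)
      then have "(s - t) *\<^sub>R x0 \<in> center" by (simp add: u_def algebra_simps)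
      then have "(1 / (s - t)) *\<^sub>R ((s - t) *\<^sub>R x0) \<in> center" by (rule center_scaleR)
      then show False using x0 \<open>s \<noteq> t\<close> by simp
    qed
    obtain \<epsilon> :: real where e: "\<epsilon> > 0" "\<And>t. 0 < \<bar>t\<bar> \<Longrightarrow> \<bar>t\<bar> < \<epsilon> \<Longrightarrow> u t \<notin> center"
    proof (cases "\<exists>t0. t0 \<noteq> 0 \<and> u t0 \<in> center")
      case True
      then obtain t0 where t0: "t0 \<noteq> 0" "u t0 \<in> center" by blast
      show ?thesis
      proof (rule that[of "\<bar>t0\<bar>"])
        show "\<bar>t0\<bar> > 0" using t0 by simp
        fix t :: real assume "0 < \<bar>t\<bar>" "\<bar>t\<bar> < \<bar>t0\<bar>"
        then have "t \<noteq> t0" by auto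
        then show "u t \<notin> center" using two t0 by blast
      qed
    next
      case False
      show ?thesis by (rule that[of 1]) (use False in auto)
    qed
    have cont: "continuous_on UNIV (\<lambda>t. ppow (u t) n)"
      by (rule continuous_on_ppow) (auto simp: u_def intro!: continuous_intros)
    then have lim: "((\<lambda>t. ppow (u t) n) \<longlongrightarrow> ppow (u 0) n) (at 0)"
      by (simp add: continuous_on_def)
    have ev: "eventually (\<lambda>t. ppow (u t) n = 0) (at (0::real))"
    proof -
      have "eventually (\<lambda>t. t \<noteq> 0 \<and> dist t 0 < \<epsilon>) (at (0::real))"
        using e(1) eventually_at by blast
      then show ?thesis
      proof eventually_elim
        case (elim t)
        then have "u t \<notin> center" using e(2) by simp
        then show ?case using central_or_nil[OF pr n pc] by blast
      qed
    qed
    have "((\<lambda>t. ppow (u t) n) \<longlongrightarrow> 0) (at (0::real))"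
      using ev by (rule tendsto_eventually)
    then have "ppow (u 0) n = 0" using tendsto_unique[OF trivial_limit_at lim] by simp
    then show ?thesis by (simp add: u_def)
  qed
  then have "x0 = 0" using nil_zero[OF pr n] by blast
  then show False using x0 by (simp add: center_def)
qed

definition Gf :: "('a::real_normed_algebra \<Rightarrow> 'a) \<Rightarrow> nat \<Rightarrow> nat \<Rightarrow> 'a \<Rightarrow> 'a \<Rightarrow> 'a" where
  "Gf f p q x y = f (jordan_prod (ppow x p) (ppow y q)) + commutator (ppow x p) (ppow y q)"

lemma polyfun_G:
  fixes f :: "'a::real_normed_algebra \<Rightarrow> 'a"
  assumes add: "\<And>x y. f (x + y) = f x + f y" and hom: "\<And>r x. f (r *\<^sub>R x) = r *\<^sub>R f x"
    and X: "polyfun X" and Y: "polyfun Y"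
  shows "polyfun (\<lambda>t. Gf f p q (X t) (Y t))"
proof -
  have PX: "polyfun (\<lambda>t. ppow (X t) p)" by (rule polyfun_ppow[OF X])
  have PY: "polyfun (\<lambda>t. ppow (Y t) q)" by (rule polyfun_ppow[OF Y])
  have J: "polyfun (\<lambda>t. jordan_prod (ppow (X t) p) (ppow (Y t) q))"
    unfolding jordan_prod_def by (intro polyfun_add polyfun_mult PX PY)
  have FJ: "polyfun (\<lambda>t. f (jordan_prod (ppow (X t) p) (ppow (Y t) q)))"
    by (rule polyfun_linear[OF add hom J])
  have C: "polyfun (\<lambda>t. commutator (ppow (X t) p) (ppow (Y t) q))"
    unfolding commutator_def by (intro polyfun_diff polyfun_mult PX PY)
  show ?thesis unfolding Gf_def by (rule polyfun_add[OF FJ C])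
qed

lemma G_hom_left:
  fixes f :: "'a::real_normed_algebra \<Rightarrow> 'a"
  assumes hom: "\<And>r x. f (r *\<^sub>R x) = r *\<^sub>R f x" and p: "p > 0"
  shows "Gf f p q (s *\<^sub>R x) y = (s ^ p) *\<^sub>R Gf f p q x y"
proof -
  have "jordan_prod (ppow (s *\<^sub>R x) p) (ppow y q) = (s ^ p) *\<^sub>R jordan_prod (ppow x p) (ppow y q)"
    unfolding jordan_prod_def ppow_scaleR[OF p] by (simp add: scaleR_add_right)
  moreover have "commutator (ppow (s *\<^sub>R x) p) (ppow y q) = (s ^ p) *\<^sub>R commutator (ppow x p) (ppow y q)"
    unfolding commutator_def ppow_scaleR[OF p] by (simp add: scaleR_diff_right)
  ultimately show ?thesis unfolding Gf_def by (simp add: hom scaleR_add_right)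
qed

lemma G_hom_right:
  fixes f :: "'a::real_normed_algebra \<Rightarrow> 'a"
  assumes hom: "\<And>r x. f (r *\<^sub>R x) = r *\<^sub>R f x" and q: "q > 0"
  shows "Gf f p q x (s *\<^sub>R y) = (s ^ q) *\<^sub>R Gf f p q x y"
proof -
  have "jordan_prod (ppow x p) (ppow (s *\<^sub>R y) q) = (s ^ q) *\<^sub>R jordan_prod (ppow x p) (ppow y q)"
    unfolding jordan_prod_def ppow_scaleR[OF q] by (simp add: scaleR_add_right)
  moreover have "commutator (ppow x p) (ppow (s *\<^sub>R y) q) = (s ^ q) *\<^sub>R commutator (ppow x p) (ppow y q)"
    unfolding commutator_def ppow_scaleR[OF q] by (simp add: scaleR_diff_right)
  ultimately show ?thesis unfolding Gf_def by (simp add: hom scaleR_add_right)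
qed

lemma cont_G:
  fixes f :: "'a::real_normed_algebra \<Rightarrow> 'a" and X Y :: "'b::topological_space \<Rightarrow> 'a"
  assumes fc: "continuous_on UNIV f" and X: "continuous_on S X" and Y: "continuous_on S Y"
  shows "continuous_on S (\<lambda>z. Gf f p q (X z) (Y z))"
proof -
  have PX: "continuous_on S (\<lambda>z. ppow (X z) p)" by (rule continuous_on_ppow[OF X])
  have PY: "continuous_on S (\<lambda>z. ppow (Y z) q)" by (rule continuous_on_ppow[OF Y])
  have J: "continuous_on S (\<lambda>z. jordan_prod (ppow (X z) p) (ppow (Y z) q))"
    unfolding jordan_prod_def by (intro continuous_on_add continuous_on_mult PX PY)
  have FJ: "continuous_on S (\<lambda>z. f (jordan_prod (ppow (X z) p) (ppow (Y z) q)))"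
    by (rule continuous_on_compose2[OF fc J]) simp
  have C: "continuous_on S (\<lambda>z. commutator (ppow (X z) p) (ppow (Y z) q))"
    unfolding commutator_def by (intro continuous_on_diff continuous_on_mult PX PY)
  show ?thesis unfolding Gf_def by (rule continuous_on_add[OF FJ C])
qed

lemma extend_from_open:
  fixes \<Phi> :: "'a::real_normed_algebra \<Rightarrow> 'a"
  assumes U: "open U" "U \<noteq> {}" and onU: "\<And>u. u \<in> U \<Longrightarrow> \<Phi> u \<in> center"
    and cont: "continuous_on UNIV \<Phi>"
    and hom: "\<And>s u. \<Phi> (s *\<^sub>R u) = (s ^ m) *\<^sub>R \<Phi> u"
    and poly: "\<And>a x. polyfun (\<lambda>t. \<Phi> (a + t *\<^sub>R x))"
  shows "\<Phi> x \<in> center"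
proof -
  obtain a where a: "a \<in> U" using U by blast
  obtain r where r: "r > 0" "ball a r \<subseteq> U" using U(1) a open_contains_ball by blast
  have line: "\<Phi> (a + t *\<^sub>R x) \<in> center" for t
  proof -
    have "\<Phi> (a + t *\<^sub>R x) * w - w * \<Phi> (a + t *\<^sub>R x) = 0" for w
    proof -
      have P: "polyfun (\<lambda>t. \<Phi> (a + t *\<^sub>R x) * w - w * \<Phi> (a + t *\<^sub>R x))"
        by (intro polyfun_diff polyfun_mult poly polyfun_const)
      define \<epsilon> where "\<epsilon> = r / (norm x + 1)"
      have n1: "norm x + 1 > 0" by (simp add: add_nonneg_pos)
      have e: "\<epsilon> > 0" unfolding \<epsilon>_def by (rule divide_pos_pos[OF r(1) n1])
      show ?thesis
      proof (rule polyfun_zero[OF P e])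
        fix t :: real assume t: "\<bar>t\<bar> < \<epsilon>"
        have "\<bar>t\<bar> * norm x \<le> \<bar>t\<bar> * (norm x + 1)" by (simp add: mult_left_mono)
        also have "\<dots> < \<epsilon> * (norm x + 1)"
          using t n1 by (intro mult_strict_right_mono) auto
        also have "\<dots> = r" using n1 by (simp add: \<epsilon>_def)
        finally have "dist a (a + t *\<^sub>R x) < r" by (simp add: dist_norm)
        then have "a + t *\<^sub>R x \<in> U" using r by auto
        then have "\<Phi> (a + t *\<^sub>R x) \<in> center" by (rule onU)
        then show "\<Phi> (a + t *\<^sub>R x) * w - w * \<Phi> (a + t *\<^sub>R x) = 0" by (simp add: center_def)
      qed
    qed
    then show ?thesis by (simp add: center_def)
  qed
  have nz: "\<Phi> (s *\<^sub>R a + x) \<in> center" if "s \<noteq> 0" for s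
  proof -
    have "s *\<^sub>R a + x = s *\<^sub>R (a + (1 / s) *\<^sub>R x)" using that by (simp add: scaleR_add_right)
    then have "\<Phi> (s *\<^sub>R a + x) = (s ^ m) *\<^sub>R \<Phi> (a + (1 / s) *\<^sub>R x)" using hom by simp
    then show ?thesis using center_scaleR[OF line[of "1 / s"], of "s ^ m"] by simp
  qed
  have c2: "continuous_on UNIV (\<lambda>s::real. \<Phi> (s *\<^sub>R a + x))"
    by (rule continuous_on_compose2[OF cont]) (auto intro!: continuous_intros)
  then have lim0: "((\<lambda>s::real. \<Phi> (s *\<^sub>R a + x)) \<longlongrightarrow> \<Phi> (0 *\<^sub>R a + x)) (at 0 within UNIV)"
    unfolding continuous_on_def by blast
  then have lim: "((\<lambda>s::real. \<Phi> (s *\<^sub>R a + x)) \<longlongrightarrow> \<Phi> (0 *\<^sub>R a + x)) (at 0)"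
    by assumption
  have ev: "eventually (\<lambda>s::real. \<Phi> (s *\<^sub>R a + x) \<in> center) (at 0)"
    using eventually_at_filter nz by (auto simp: eventually_at intro: exI[of _ 1])
  have "\<Phi> (0 *\<^sub>R a + x) \<in> center"
    by (rule Lim_in_closed_set[OF closed_center ev trivial_limit_at lim])
  then show ?thesis by simp
qed

theorem theorem2p3:
  fixes f :: "'a::{real_normed_algebra, banach} \<Rightarrow> 'a"
    and H1 H2 :: "'a set"
  assumes "prime_ring TYPE('a)"
    and "open H1" and "H1 \<noteq> {}" and "open H2" and "H2 \<noteq> {}"
    and "is_automorphism f" and "continuous_on UNIV f"
    and "\<forall>x\<in>H1. \<forall>y\<in>H2. \<exists>p q::nat. p > 0 \<and> q > 0 \<and>
           f (jordan_prod (ppow x p) (ppow y q)) + commutator (ppow x p) (ppow y q) \<in> center"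
  shows "\<forall>x y::'a. x * y = y * x"
proof -
  note pr = assms(1) and fcont = assms(7)
  have finj: "inj f" and fadd: "\<And>x y. f (x + y) = f x + f y" and fmul: "\<And>x y. f (x * y) = f x * f y"
    using assms(6) unfolding is_automorphism_def bij_def by blast+
  have hom: "\<And>r x. f (r *\<^sub>R x) = r *\<^sub>R f x" using additive_cont_homog[of f] fadd fcont by blast
  obtain p q U V where pq: "p > 0" "q > 0" and U: "open U" "U \<noteq> {}" and V: "open V" "V \<noteq> {}"
    and UV: "\<And>x y. x \<in> U \<Longrightarrow> y \<in> V \<Longrightarrow> Gf f p q x y \<in> center"
  proof -
    define W where "W = H1 \<times> H2"
    define X where "X = top_of_set W"
    define E where "E pq = {z\<in>W. 0 < fst pq \<and> 0 < snd pq \<and> Gf f (fst pq) (snd pq) (fst z) (snd z) \<in> center}"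
      for pq :: "nat \<times> nat"
    have Wopen: "open W" using assms(2,4) by (simp add: W_def open_Times)
    have Wne: "W \<noteq> {}" using assms(3,5) by (simp add: W_def)
    have cm: "completely_metrizable_space X" unfolding X_def
      by (rule completely_metrizable_space_openin[OF completely_metrizable_space_euclidean]) (simp add: Wopen)
    have closedE: "closedin X (E pq)" for pq
    proof (cases "0 < fst pq \<and> 0 < snd pq")
      case True
      have cG: "continuous_on UNIV (\<lambda>z::'a\<times>'a. Gf f (fst pq) (snd pq) (fst z) (snd z))"
        by (rule cont_G[OF fcont continuous_on_fst[OF continuous_on_id] continuous_on_snd[OF continuous_on_id]])
      have "closed ((\<lambda>z::'a\<times>'a. Gf f (fst pq) (snd pq) (fst z) (snd z)) -` center \<inter> UNIV)"
        by (rule closed_vimage_Int[OF closed_center cG closed_UNIV])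
      moreover have "E pq = W \<inter> ((\<lambda>z::'a\<times>'a. Gf f (fst pq) (snd pq) (fst z) (snd z)) -` center \<inter> UNIV)"
        using True by (auto simp: E_def)
      ultimately show ?thesis unfolding X_def by (simp add: closedin_closed_Int)
    next
      case False
      then have "E pq = {}" by (auto simp: E_def)
      then show ?thesis by simp
    qed
    have union: "\<Union>(range E) = W"
    proof
      show "\<Union>(range E) \<subseteq> W" by (auto simp: E_def)
      show "W \<subseteq> \<Union>(range E)"
      proof
        fix z assume z: "z \<in> W"
        then obtain p q where "p > 0" "q > 0" "Gf f p q (fst z) (snd z) \<in> center"
          using assms(8) by (force simp: W_def Gf_def)
        then have "z \<in> E (p, q)" using z by (simp add: E_def)
        then show "z \<in> \<Union>(range E)" by blast
      qed
    qed
    have "\<exists>pq. X interior_of E pq \<noteq> {}"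
    proof (rule ccontr)
      assume "\<not> ?thesis"
      then have "\<And>T. T \<in> range E \<Longrightarrow> closedin X T \<and> X interior_of T = {}" using closedE by auto
      then have "X interior_of \<Union>(range E) = {}"
        using Baire_category_alt[of X "range E"] cm by auto
      moreover have "X interior_of \<Union>(range E) = W"
        unfolding union X_def by (metis interior_of_topspace topspace_subtopology_subset top_greatest topspace_euclidean)
      ultimately show False using Wne by simp
    qed
    then obtain pq z0 where z0: "z0 \<in> X interior_of E pq" by blast
    have "X interior_of E pq = W \<inter> interior (E pq)"
      unfolding X_def by (simp add: interior_of_subtopology_open Wopen)
    then have "z0 \<in> interior (E pq)" using z0 by simp
    then obtain r where r: "r > 0" "ball z0 r \<subseteq> E pq" by (auto simp: mem_interior)
    have z0E: "z0 \<in> E pq" using r by auto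
    show ?thesis
    proof (rule that[of "fst pq" "snd pq" "ball (fst z0) (r/2)" "ball (snd z0) (r/2)"])
      show "0 < fst pq" "0 < snd pq" using z0E by (auto simp: E_def)
      show "open (ball (fst z0) (r / 2))" "open (ball (snd z0) (r / 2))" by simp_all
      show "ball (fst z0) (r / 2) \<noteq> {}" "ball (snd z0) (r / 2) \<noteq> {}" using r by auto
      fix x y assume x: "x \<in> ball (fst z0) (r / 2)" and y: "y \<in> ball (snd z0) (r / 2)"
      have "dist z0 (x, y) = norm (fst z0 - x, snd z0 - y)"
        by (cases z0) (simp add: dist_norm)
      also have "\<dots> \<le> norm (fst z0 - x) + norm (snd z0 - y)" by (rule norm_Pair_le)
      also have "\<dots> < r" using x y by (simp add: dist_norm)
      finally have "(x, y) \<in> E pq" using r by auto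
      then show "Gf f (fst pq) (snd pq) x y \<in> center" by (simp add: E_def)
    qed
  qed
  have all1: "Gf f p q x y \<in> center" if y: "y \<in> V" for x y
  proof (rule extend_from_open[OF U, where \<Phi> = "\<lambda>x. Gf f p q x y" and m = p])
    show "\<And>u. u \<in> U \<Longrightarrow> Gf f p q u y \<in> center" using UV y by blast
    show "continuous_on UNIV (\<lambda>x. Gf f p q x y)"
      by (rule cont_G[OF fcont continuous_on_id continuous_on_const])
    show "\<And>s u. Gf f p q (s *\<^sub>R u) y = s ^ p *\<^sub>R Gf f p q u y" by (rule G_hom_left[OF hom pq(1)])
    show "\<And>a x. polyfun (\<lambda>t. Gf f p q (a + t *\<^sub>R x) y)"
      by (rule polyfun_G[OF fadd hom polyfun_line polyfun_const])
  qed
  have all2: "Gf f p q x y \<in> center" for x y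
  proof (rule extend_from_open[OF V, where \<Phi> = "\<lambda>y. Gf f p q x y" and m = q])
    show "\<And>u. u \<in> V \<Longrightarrow> Gf f p q x u \<in> center" using all1 by blast
    show "continuous_on UNIV (\<lambda>y. Gf f p q x y)"
      by (rule cont_G[OF fcont continuous_on_const continuous_on_id])
    show "\<And>s u. Gf f p q x (s *\<^sub>R u) = s ^ q *\<^sub>R Gf f p q x u" by (rule G_hom_right[OF hom pq(2)])
    show "\<And>a y. polyfun (\<lambda>t. Gf f p q x (a + t *\<^sub>R y))"
      by (rule polyfun_G[OF fadd hom polyfun_const polyfun_line])
  qed
  define n where "n = p + q"
  have n: "n > 0" using pq n_def by simp
  have pc: "ppow x n \<in> center" for x :: 'a
  proof -
    have e1: "ppow x p * ppow x q = ppow x n" using ppow_add[OF pq] n_def by simp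
    have e2: "ppow x q * ppow x p = ppow x n" using ppow_add[OF pq(2) pq(1)] n_def by (simp add: add.commute)
    have "Gf f p q x x = f (ppow x n) + f (ppow x n)"
      unfolding Gf_def jordan_prod_def commutator_def e1 e2 by (simp add: fadd)
    then have "f (ppow x n) + f (ppow x n) \<in> center" using all2 by metis
    then have "(1/2 :: real) *\<^sub>R (f (ppow x n) + f (ppow x n)) \<in> center" by (rule center_scaleR)
    then have fc: "f (ppow x n) \<in> center" by (simp add: scaleR_add_right[symmetric] scaleR_2[symmetric])
    have "ppow x n * r = r * ppow x n" for r
    proof -
      have "f (ppow x n * r) = f (r * ppow x n)" using fc by (simp add: fmul center_def)
      then show ?thesis using finj by (simp add: inj_eq)
    qed
    then show ?thesis by (simp add: center_def)
  qed
  show ?thesis by (rule comm_from_power_central[OF pr n pc])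
qed

end
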